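(* Consider the multiobjective optimal control setting, Assumption A and Algorithm 1 described in the context, let $x_0\in\mathbb{X}_N$, and assume in addition that there is $\gamma_{\lambda_1}\in\mathcal K_\infty$ with $|\lambda_1(x)-\lambda_1(x^e)|\le\gamma_{\lambda_1}(\|x-x^e\|)$ for all $x\in\mathbb{X}$, and that $\ell_1(x^e,u^e)=0$. Then the MPC feedback $\mu^N:\mathbb{N}_0\times\mathbb{X}\to\mathbb{U}$ defined by Algorithm 1 renders the set $\mathbb{X}$ forward invariant (the closed loop is well defined and stays in $\mathbb{X}$) and has the infinite-horizon closed-loop performance \[J_1^\infty(x_0,\mu^N):=\sum_{k=0}^\infty\ell_1\big(x_\mu(k,x_0),\mu^N(k,x_\mu(k,x_0))\big)\le J_1^N(x_0,\mathbf{u}^\star_{x_0}),\] where $\mathbf{u}^\star_{x_0}$ is the efficient solution chosen in step (0) of Algorithm 1.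
   Context: Let $f:\mathbb{R}^n\times\mathbb{R}^m\to\mathbb{R}^n$ be continuous and consider $x(k+1)=f(x(k),u(k))$, $x(0)=x_0$; $x_{\mathbf{u}}(k,x_0)$ denotes the solution for control sequence $\mathbf u$. Let $\mathbb{X}\subseteq\mathbb{R}^n$, $\mathbb{U}\subseteq\mathbb{R}^m$, $\mathbb{X}_0\subseteq\mathbb{X}$ be nonempty; horizons $N\ge2$, objectives $s\ge2$. $\mathbb{U}^N(x_0)$ is the set of $\mathbf{u}\in\mathbb{U}^N$ with $x_{\mathbf{u}}(k,x_0)\in\mathbb{X}$ for $k=1,\dots,N-1$ and $x_{\mathbf{u}}(N,x_0)\in\mathbb{X}_0$; $\mathbb{X}_N=\{x_0\in\mathbb{X}:\mathbb{U}^N(x_0)\neq\emptyset\}$. With stage costs $\ell_i:\mathbb{X}\times\mathbb{U}\to\mathbb{R}$ ($i=1,\dots,s$) and continuous $F_1:\mathbb{X}_0\to\mathbb{R}_{\ge0}$: $J_1^N(x_0,\mathbf{u})=\sum_{k=0}^{N-1}\ell_1(x_{\mathbf{u}}(k,x_0),u(k))+F_1(x_{\mathbf{u}}(N,x_0))$, $J_i^N(x_0,\mathbf{u})=\sum_{k=0}^{N-1}\ell_i(x_{\mathbf{u}}(k,x_0),u(k))$ for $i\ge2$. $\mathbf{u}^\star\in\mathbb{U}^N(x_0)$ is efficient if no $\mathbf{u}\in\mathbb{U}^N(x_0)$ satisfies $J_i^N(x_0,\mathbf{u})\le J_i^N(x_0,\mathbf{u}^\star)$ for all $i$ with strict inequality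 for some $i$; $\mathbb{U}^N_{\mathcal P}(x_0)$ is the efficient set. $\mathcal{J}^N(x_0)$ is the set of vectors $(J_i^N(x_0,\mathbf u))_{i=1}^s$, $\mathbf u\in\mathbb{U}^N(x_0)$, $\mathcal{J}^N_{\mathcal P}(x_0)$ the subset for efficient $\mathbf u$; external stability means every $y\in\mathcal{J}^N(x_0)$ dominates componentwise some $y_{\mathcal P}\in\mathcal{J}^N_{\mathcal P}(x_0)$. $\mathcal K_\infty$: continuous strictly increasing unbounded functions $\mathbb{R}_{\ge0}\to\mathbb{R}_{\ge0}$ vanishing at $0$. Assumption A: (i) $(x^e,u^e)\in\mathbb{X}\times\mathbb{U}$ with $f(x^e,u^e)=x^e$; (ii) $\lambda_1:\mathbb{X}\to\mathbb{R}$ bounded below, $\lambda_1(x^e)=0$, $\alpha_{\ell,1}\in\mathcal K_\infty$ with $\ell_1(x,u)-\ell_1(x^e,u^e)+\lambda_1(x)-\lambda_1(f(x,u))\ge\alpha_{\ell,1}(\|x-x^e\|+\|u-u^e\|)$ on $\mathbb{X}\times\mathbb{U}$; (iii) all $\ell_i$ continuous; (iv) $x^e\in\mathbb{X}_0$ and $\kappa:\mathbb{X}_0\to\mathbb{U}$ with $f(x,\kappa(x))\in\mathbb{X}_0$ and $F_1(f(x,\kappa(x)))+\ell_1(x,\kappa(x))\le F_1(x)+\ell_1(x^e,u^e)$ for all $x\in\mathbb{X}_0$; (v) $\mathcal{J}^N_{\mathcal P}(x)$ externally stable for $\mathcal{J}^N(x)$ for all $x\in\mathbb{X}_N$. Algorithm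 1 ($k\in\mathbb N_0$): $x(0)=x_0$, choose any $\mathbf{u}^\star_{x(0)}=\mathbf{u}^\star_{x_0}\in\mathbb{U}^N_{\mathcal P}(x(0))$; for $k\ge1$ choose $\mathbf{u}^\star_{x(k)}\in\mathbb{U}^N_{\mathcal P}(x(k))$ with $J_1^N(x(k),\mathbf{u}^\star_{x(k)})\le J_1^N(x(k),\mathbf{u}_{x(k)})$, where $\mathbf{u}_{x(k+1)}:=(u^\star_{x(k)}(1),\dots,u^\star_{x(k)}(N-1),\kappa(x_{\mathbf{u}^\star_{x(k)}}(N,x(k))))$. Feedback $\mu^N(k,x(k)):=u^\star_{x(k)}(0)$, $x(k+1)=f(x(k),\mu^N(k,x(k)))$, $x_\mu(k,x_0):=x(k)$. The statement applies to any admissible choices of efficient solutions. *)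

theory Defs
  imports "HOL-Analysis.Analysis"
begin

definition Kinf :: "(real \<Rightarrow> real) \<Rightarrow> bool" where
  "Kinf \<alpha> \<longleftrightarrow> continuous_on {0..} \<alpha> \<and> strict_mono_on {0..} \<alpha> \<and> \<alpha> 0 = 0
     \<and> (\<forall>r\<ge>0. \<alpha> r \<ge> 0) \<and> \<not> bdd_above (\<alpha> ` {0..})"

primrec traj :: "('x \<Rightarrow> 'u \<Rightarrow> 'x) \<Rightarrow> 'x \<Rightarrow> 'u list \<Rightarrow> nat \<Rightarrow> 'x" where
  "traj f x0 us 0 = x0"
| "traj f x0 us (Suc k) = f (traj f x0 us k) (us ! k)"

definition adm_controls ::
  "('x \<Rightarrow> 'u \<Rightarrow> 'x) \<Rightarrow> 'x set \<Rightarrow> 'u set \<Rightarrow> 'x set \<Rightarrow> nat \<Rightarrow> 'x \<Rightarrow> 'u list set" where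
  "adm_controls f X U X0 N x0 =
     {us. length us = N \<and> set us \<subseteq> U \<and> (\<forall>k\<in>{1..N-1}. traj f x0 us k \<in> X)
          \<and> traj f x0 us N \<in> X0}"

definition feasible_set ::
  "('x \<Rightarrow> 'u \<Rightarrow> 'x) \<Rightarrow> 'x set \<Rightarrow> 'u set \<Rightarrow> 'x set \<Rightarrow> nat \<Rightarrow> 'x set" where
  "feasible_set f X U X0 N = {x0 \<in> X. adm_controls f X U X0 N x0 \<noteq> {}}"

definition Jcost ::
  "('x \<Rightarrow> 'u \<Rightarrow> 'x) \<Rightarrow> nat \<Rightarrow> (nat \<Rightarrow> 'x \<Rightarrow> 'u \<Rightarrow> real) \<Rightarrow> ('x \<Rightarrow> real)
    \<Rightarrow> nat \<Rightarrow> 'x \<Rightarrow> 'u list \<Rightarrow> real" where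
  "Jcost f N ell F1 i x0 us =
     (\<Sum>k<N. ell i (traj f x0 us k) (us ! k)) + (if i = 1 then F1 (traj f x0 us N) else 0)"

definition eff_controls ::
  "('x \<Rightarrow> 'u \<Rightarrow> 'x) \<Rightarrow> 'x set \<Rightarrow> 'u set \<Rightarrow> 'x set \<Rightarrow> nat \<Rightarrow> nat
    \<Rightarrow> (nat \<Rightarrow> 'x \<Rightarrow> 'u \<Rightarrow> real) \<Rightarrow> ('x \<Rightarrow> real) \<Rightarrow> 'x \<Rightarrow> 'u list set" where
  "eff_controls f X U X0 N s ell F1 x0 =
     {us \<in> adm_controls f X U X0 N x0.
        \<not> (\<exists>vs \<in> adm_controls f X U X0 N x0.
              (\<forall>i\<in>{1..s}. Jcost f N ell F1 i x0 vs \<le> Jcost f N ell F1 i x0 us)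
            \<and> (\<exists>i\<in>{1..s}. Jcost f N ell F1 i x0 vs < Jcost f N ell F1 i x0 us))}"

definition cost_vectors ::
  "('x \<Rightarrow> 'u \<Rightarrow> 'x) \<Rightarrow> nat \<Rightarrow> nat \<Rightarrow> (nat \<Rightarrow> 'x \<Rightarrow> 'u \<Rightarrow> real) \<Rightarrow> ('x \<Rightarrow> real)
    \<Rightarrow> 'x \<Rightarrow> 'u list set \<Rightarrow> (nat \<Rightarrow> real) set" where
  "cost_vectors f N s ell F1 x0 A =
     (\<lambda>us. restrict (\<lambda>i. Jcost f N ell F1 i x0 us) {1..s}) ` A"

definition externally_stable :: "nat \<Rightarrow> (nat \<Rightarrow> real) set \<Rightarrow> (nat \<Rightarrow> real) set \<Rightarrow> bool" where
  "externally_stable s YP Y \<longleftrightarrow> (\<forall>y\<in>Y. \<exists>yP\<in>YP. \<forall>i\<in>{1..s}. yP i \<le> y i)"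

definition shifted_seq ::
  "('x \<Rightarrow> 'u \<Rightarrow> 'x) \<Rightarrow> nat \<Rightarrow> ('x \<Rightarrow> 'u) \<Rightarrow> 'x \<Rightarrow> 'u list \<Rightarrow> 'u list" where
  "shifted_seq f N \<kappa> x us = tl us @ [\<kappa> (traj f x us N)]"

text \<open>Algorithm 1 run up to time K: closed-loop states xcl 0..K and chosen
  efficient sequences us 0..K; feedback mu^N(k, x(k)) = us k ! 0.\<close>
definition alg1_prefix ::
  "('x \<Rightarrow> 'u \<Rightarrow> 'x) \<Rightarrow> 'x set \<Rightarrow> 'u set \<Rightarrow> 'x set \<Rightarrow> nat \<Rightarrow> nat
    \<Rightarrow> (nat \<Rightarrow> 'x \<Rightarrow> 'u \<Rightarrow> real) \<Rightarrow> ('x \<Rightarrow> real) \<Rightarrow> ('x \<Rightarrow> 'u) \<Rightarrow> 'x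
    \<Rightarrow> nat \<Rightarrow> (nat \<Rightarrow> 'x) \<Rightarrow> (nat \<Rightarrow> 'u list) \<Rightarrow> bool" where
  "alg1_prefix f X U X0 N s ell F1 \<kappa> x0 K xcl us \<longleftrightarrow>
     xcl 0 = x0 \<and> us 0 \<in> eff_controls f X U X0 N s ell F1 x0 \<and>
     (\<forall>k<K. xcl (Suc k) = f (xcl k) (us k ! 0)
        \<and> us (Suc k) \<in> eff_controls f X U X0 N s ell F1 (xcl (Suc k))
        \<and> Jcost f N ell F1 1 (xcl (Suc k)) (us (Suc k))
            \<le> Jcost f N ell F1 1 (xcl (Suc k)) (shifted_seq f N \<kappa> (xcl k) (us k)))"

end

theory Submission imports Defs begin

lemma traj_shift:
  assumes "k < length us"
  shows "traj f (f x (us!0)) (tl us @ [w]) k = traj f x us (Suc k)"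
  using assms
proof (induction k)
  case 0 then show ?case by simp
next
  case (Suc k)
  have "k < length (tl us)" using Suc.prems by simp
  hence "(tl us @ [w]) ! k = us ! Suc k" by (simp add: nth_append nth_tl)
  then show ?case using Suc by simp
qed

lemma traj_shift_end:
  assumes "length us = Suc M"
  shows "traj f (f x (us!0)) (tl us @ [w]) (Suc M) = f (traj f x us (Suc M)) w"
  using assms by (simp add: traj_shift nth_append)

lemma shifted_adm:
  assumes "us \<in> adm_controls f X U X0 N x" "N \<ge> 2" "\<forall>x\<in>X0. \<kappa> x \<in> U"
    "\<forall>x\<in>X0. f x (\<kappa> x) \<in> X0" "X0 \<subseteq> X"
  shows "shifted_seq f N \<kappa> x us \<in> adm_controls f X U X0 N (f x (us!0))"
proof -
  obtain M where M: "N = Suc M" using assms(2) by (cases N) auto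
  have len: "length us = N" and setU: "set us \<subseteq> U" and inX: "\<forall>k\<in>{1..N-1}. traj f x us k \<in> X"
    and tm: "traj f x us N \<in> X0" using assms(1) unfolding adm_controls_def by auto
  have "set (tl us) \<subseteq> set us" by (cases us) auto
  hence "set (tl us) \<subseteq> U" using setU by blast
  moreover have "\<kappa> (traj f x us N) \<in> U" using tm assms(3) by blast
  ultimately have s1: "set (shifted_seq f N \<kappa> x us) \<subseteq> U" unfolding shifted_seq_def by auto
  have s2: "traj f (f x (us!0)) (shifted_seq f N \<kappa> x us) k \<in> X" if "k \<in> {1..N-1}" for k
  proof -
    have "k < length us" using that len M by auto
    hence e: "traj f (f x (us!0)) (shifted_seq f N \<kappa> x us) k = traj f x us (Suc k)"
      unfolding shifted_seq_def by (rule traj_shift)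
    show ?thesis
    proof (cases "Suc k = N")
      case True
      hence "traj f x us (Suc k) \<in> X0" using tm by simp
      thus ?thesis using e assms(5) by auto
    next
      case False
      hence "Suc k \<in> {1..N-1}" using that by auto
      with inX have "traj f x us (Suc k) \<in> X" by blast
      thus ?thesis by (simp only: e)
    qed
  qed
  have s3: "traj f (f x (us!0)) (shifted_seq f N \<kappa> x us) N \<in> X0"
    unfolding shifted_seq_def M using traj_shift_end[of us M f x] len M tm assms(4) by auto
  have s0: "length (shifted_seq f N \<kappa> x us) = N" unfolding shifted_seq_def using len M by simp
  show ?thesis unfolding adm_controls_def using s0 s1 s2 s3 by blast
qed

lemma sum_Suc_eq1: "N = Suc M \<Longrightarrow> sum g {..<N} = sum g {..<M} + (g M :: real)"
  by simp

lemma sum_Suc_eq2: "N = Suc M \<Longrightarrow> sum g {..<N} = (g 0 :: real) + sum (\<lambda>k. g (Suc k)) {..<M}"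
  by (simp only: sum.lessThan_Suc_shift)

lemma shifted_cost:
  assumes "length us = N" "N \<ge> 1"
  shows "Jcost f N ell F1 1 (f x (us!0)) (shifted_seq f N \<kappa> x us)
    = Jcost f N ell F1 1 x us - ell 1 x (us!0) + ell 1 (traj f x us N) (\<kappa> (traj f x us N))
      + F1 (f (traj f x us N) (\<kappa> (traj f x us N))) - F1 (traj f x us N)"
proof -
  obtain M where M: "N = Suc M" using assms(2) by (cases N) auto
  let ?sh = "tl us @ [\<kappa> (traj f x us N)]"
  have a: "(\<Sum>k<N. ell 1 (traj f (f x (us!0)) ?sh k) (?sh ! k))
     = (\<Sum>k<M. ell 1 (traj f x us (Suc k)) (us ! Suc k)) + ell 1 (traj f x us N) (\<kappa> (traj f x us N))"
  proof -
    have "(\<Sum>k<M. ell 1 (traj f (f x (us!0)) ?sh k) (?sh ! k)) = (\<Sum>k<M. ell 1 (traj f x us (Suc k)) (us ! Suc k))"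
      by (rule sum.cong) (use assms M in \<open>auto simp: traj_shift nth_append nth_tl\<close>)
    moreover have "traj f (f x (us!0)) ?sh M = traj f x us N" using traj_shift[of M us] assms M by auto
    moreover have "?sh ! M = \<kappa> (traj f x us N)" using assms M by (simp add: nth_append)
    moreover have "(\<Sum>k<N. ell 1 (traj f (f x (us!0)) ?sh k) (?sh ! k)) = (\<Sum>k<M. ell 1 (traj f (f x (us!0)) ?sh k) (?sh ! k)) + ell 1 (traj f (f x (us!0)) ?sh M) (?sh ! M)"
      using sum_Suc_eq1[OF M] .
    ultimately show ?thesis by simp
  qed
  have b: "(\<Sum>k<N. ell 1 (traj f x us k) (us ! k)) = ell 1 x (us!0) + (\<Sum>k<M. ell 1 (traj f x us (Suc k)) (us ! Suc k))"
    using sum_Suc_eq2[OF M, of "\<lambda>k. ell 1 (traj f x us k) (us ! k)"] by simp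
  have c: "traj f (f x (us!0)) ?sh N = f (traj f x us N) (\<kappa> (traj f x us N))"
    using traj_shift_end[of us M f x] assms M by simp
  show ?thesis unfolding Jcost_def shifted_seq_def using a b c by simp
qed

lemma cost_lower:
  assumes "us \<in> adm_controls f X U X0 N x" "x \<in> X"
    "\<forall>x\<in>X. \<forall>u\<in>U. ell 1 x u \<ge> lam (f x u) - lam x"
  shows "Jcost f N ell F1 1 x us \<ge> lam (traj f x us N) - lam x + F1 (traj f x us N)"
proof -
  have len: "length us = N" and setU: "set us \<subseteq> U" and inX: "\<forall>k\<in>{1..N-1}. traj f x us k \<in> X"
    using assms(1) unfolding adm_controls_def by auto
  have "n \<le> N \<Longrightarrow> (\<Sum>k<n. ell 1 (traj f x us k) (us!k)) \<ge> lam (traj f x us n) - lam x" for n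
  proof (induction n)
    case 0 then show ?case by simp
  next
    case (Suc n)
    have tX: "traj f x us n \<in> X"
    proof (cases n)
      case 0 then show ?thesis using assms(2) by simp
    next
      case (Suc m)
      hence "n \<in> {1..N-1}" using \<open>Suc n \<le> N\<close> by auto
      then show ?thesis using inX by blast
    qed
    have uU: "us ! n \<in> U" using setU len Suc.prems nth_mem by fastforce
    have "ell 1 (traj f x us n) (us!n) \<ge> lam (traj f x us (Suc n)) - lam (traj f x us n)"
      using assms(3) tX uU by simp
    then show ?case using Suc by simp
  qed
  from this[of N] show ?thesis unfolding Jcost_def by simp
qed

lemma Kinf_mono: "Kinf a \<Longrightarrow> 0 \<le> x \<Longrightarrow> x \<le> y \<Longrightarrow> a x \<le> a y"
  unfolding Kinf_def strict_mono_on_def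
  by (metis atLeast_iff dual_order.trans order_le_less order_refl)

lemma Kinf_nonneg: "Kinf a \<Longrightarrow> 0 \<le> x \<Longrightarrow> 0 \<le> a x"
  unfolding Kinf_def by auto

lemma Kinf_to_zero:
  assumes "Kinf a" "\<forall>j. r j \<ge> 0" "(\<lambda>j. a (r j)) \<longlonglongrightarrow> 0"
  shows "r \<longlonglongrightarrow> 0"
proof (rule LIMSEQ_I)
  fix e :: real assume e: "e > 0"
  have ae: "a e > 0" using assms(1) e unfolding Kinf_def strict_mono_on_def
    by (metis atLeast_iff order_refl less_imp_le)
  obtain no where no: "\<forall>n\<ge>no. norm (a (r n) - 0) < a e" using LIMSEQ_D[OF assms(3) ae] by blast
  have "norm (r n - 0) < e" if "n \<ge> no" for n
  proof (rule ccontr)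
    assume "\<not> norm (r n - 0) < e"
    hence "e \<le> r n" using assms(2) by auto
    hence "a e \<le> a (r n)" using Kinf_mono[OF assms(1)] e by simp
    thus False using no that by auto
  qed
  thus "\<exists>no. \<forall>n\<ge>no. norm (r n - 0) < e" by blast
qed

lemma Kinf_tendsto_zero:
  assumes "Kinf a" "\<forall>j. r j \<ge> 0" "r \<longlonglongrightarrow> 0"
  shows "(\<lambda>j. a (r j)) \<longlonglongrightarrow> 0"
proof -
  have "continuous_on {0..} a" "a 0 = 0" using assms(1) unfolding Kinf_def by auto
  moreover have "(\<lambda>j. a (r j)) \<longlonglongrightarrow> a 0"
    using continuous_on_tendsto_compose[OF \<open>continuous_on {0..} a\<close> assms(3)] assms(2) by auto
  ultimately show ?thesis by simp
qed

lemma W_nonneg: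
  fixes f :: "'x::real_normed_vector \<Rightarrow> 'u \<Rightarrow> 'x"
  assumes aK: "Kinf a" and gK: "Kinf g" and lb: "bdd_below (lam ` X)" and sub: "XZ \<subseteq> X"
   and xeXZ: "xe \<in> XZ"
   and FFc: "continuous_on XZ FF" and FFn: "\<forall>x\<in>XZ. FF x \<ge> 0"
   and kinv: "\<forall>x\<in>XZ. f x (\<kappa> x) \<in> XZ"
   and dec: "\<forall>x\<in>XZ. FF (f x (\<kappa> x)) + lam (f x (\<kappa> x)) + a (norm (x - xe)) \<le> FF x + lam x"
   and lc: "\<forall>x\<in>X. \<bar>lam x - lam xe\<bar> \<le> g (norm (x - xe))" and lxe: "lam xe = 0"
   and x: "x \<in> XZ"
  shows "FF x + lam x \<ge> 0"
proof -
  define y where "y j = ((\<lambda>z. f z (\<kappa> z)) ^^ j) x" for j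
  have ySuc: "y (Suc j) = f (y j) (\<kappa> (y j))" for j by (simp add: y_def)
  have yXZ: "y j \<in> XZ" for j
  proof (induction j)
    case 0 show ?case using x by (simp add: y_def)
  next
    case (Suc j) thus ?case using kinv by (simp add: ySuc)
  qed
  have yX: "y j \<in> X" for j using yXZ sub by blast
  define W where "W j = FF (y j) + lam (y j)" for j
  have Wdec: "W (Suc j) + a (norm (y j - xe)) \<le> W j" for j
    using dec[rule_format, OF yXZ[of j]] by (simp add: W_def ySuc)
  have anon: "a (norm (y j - xe)) \<ge> 0" for j using Kinf_nonneg[OF aK] by simp
  have Wsum: "W j + (\<Sum>i<j. a (norm (y i - xe))) \<le> W 0" for j
  proof (induction j)
    case 0 show ?case by simp
  next
    case (Suc j) thus ?case using Wdec[of j] by simp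
  qed
  obtain b where b: "\<forall>z\<in>X. b \<le> lam z" using lb by (auto simp: bdd_below_def)
  have Wlb: "W j \<ge> b" for j using b yX[of j] FFn yXZ[of j] unfolding W_def by force
  have "summable (\<lambda>i. a (norm (y i - xe)))"
  proof (rule summableI_nonneg_bounded[where x="W 0 - b"])
    fix n show "0 \<le> a (norm (y n - xe))" by (rule anon)
    show "(\<Sum>i<n. a (norm (y i - xe))) \<le> W 0 - b" using Wsum[of n] Wlb[of n] by linarith
  qed
  hence "(\<lambda>i. a (norm (y i - xe))) \<longlonglongrightarrow> 0" by (rule summable_LIMSEQ_zero)
  hence r0: "(\<lambda>i. norm (y i - xe)) \<longlonglongrightarrow> 0" using Kinf_to_zero[OF aK] by simp
  hence "(\<lambda>i. y i - xe) \<longlonglongrightarrow> 0" by (simp only: tendsto_norm_zero_iff)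
  hence yl: "y \<longlonglongrightarrow> xe" by (simp only: LIM_zero_iff)
  have FFl: "(\<lambda>i. FF (y i)) \<longlonglongrightarrow> FF xe"
    using continuous_on_tendsto_compose[OF FFc yl xeXZ] yXZ by auto
  have gl: "(\<lambda>i. g (norm (y i - xe))) \<longlonglongrightarrow> 0" using Kinf_tendsto_zero[OF gK _ r0] by simp
  have "\<forall>i. norm (lam (y i)) \<le> g (norm (y i - xe))" using lc yX lxe by auto
  hence laml: "(\<lambda>i. lam (y i)) \<longlonglongrightarrow> 0"
    by (intro Lim_null_comparison[OF always_eventually gl]) blast
  have "W \<longlonglongrightarrow> FF xe + 0" unfolding W_def by (intro tendsto_add FFl laml)
  moreover have "W j \<le> W 0" for j
  proof -
    have "(\<Sum>i<j. a (norm (y i - xe))) \<ge> 0" by (rule sum_nonneg) (use anon in auto)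
    thus ?thesis using Wsum[of j] by linarith
  qed
  ultimately have "FF xe + 0 \<le> W 0" by (intro LIMSEQ_le_const2) auto
  moreover have "FF xe \<ge> 0" using FFn xeXZ by blast
  ultimately show ?thesis by (simp add: W_def y_def)
qed

theorem theorem4p5:
  fixes f :: "real ^ 'n \<Rightarrow> real ^ 'm \<Rightarrow> real ^ 'n"
    and X X0 :: "(real ^ 'n) set" and U :: "(real ^ 'm) set"
    and N s :: nat
    and ell :: "nat \<Rightarrow> real ^ 'n \<Rightarrow> real ^ 'm \<Rightarrow> real"
    and F1 :: "real ^ 'n \<Rightarrow> real"
    and xe :: "real ^ 'n" and ue :: "real ^ 'm"
    and lam1 :: "real ^ 'n \<Rightarrow> real"
    and alpha1 gamma :: "real \<Rightarrow> real"
    and \<kappa> :: "real ^ 'n \<Rightarrow> real ^ 'm"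
    and x0 :: "real ^ 'n"
  assumes f_cont: "continuous_on UNIV (\<lambda>(x, u). f x u)"
    and X_ne: "X \<noteq> {}" and U_ne: "U \<noteq> {}" and X0_ne: "X0 \<noteq> {}" and X0_sub: "X0 \<subseteq> X"
    and N_ge: "N \<ge> 2" and s_ge: "s \<ge> 2"
    and F1_cont: "continuous_on X0 F1" and F1_nonneg: "\<forall>x\<in>X0. F1 x \<ge> 0"
    \<comment> \<open>Assumption A (i)\<close>
    and eq_mem: "xe \<in> X" "ue \<in> U" and eq_fix: "f xe ue = xe"
    \<comment> \<open>Assumption A (ii)\<close>
    and lam_bdd: "bdd_below (lam1 ` X)" and lam_xe: "lam1 xe = 0"
    and alpha_K: "Kinf alpha1"
    and dissip: "\<forall>x\<in>X. \<forall>u\<in>U. ell 1 x u - ell 1 xe ue + lam1 x - lam1 (f x u)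
                    \<ge> alpha1 (norm (x - xe) + norm (u - ue))"
    \<comment> \<open>Assumption A (iii)\<close>
    and ell_cont: "\<forall>i\<in>{1..s}. continuous_on (X \<times> U) (\<lambda>(x, u). ell i x u)"
    \<comment> \<open>Assumption A (iv)\<close>
    and xe_X0: "xe \<in> X0"
    and kappa_U: "\<forall>x\<in>X0. \<kappa> x \<in> U"
    and kappa_inv: "\<forall>x\<in>X0. f x (\<kappa> x) \<in> X0"
    and kappa_dec: "\<forall>x\<in>X0. F1 (f x (\<kappa> x)) + ell 1 x (\<kappa> x) \<le> F1 x + ell 1 xe ue"
    \<comment> \<open>Assumption A (v)\<close>
    and ext_stab: "\<forall>x\<in>feasible_set f X U X0 N.
        externally_stable s
          (cost_vectors f N s ell F1 x (eff_controls f X U X0 N s ell F1 x))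
          (cost_vectors f N s ell F1 x (adm_controls f X U X0 N x))"
    \<comment> \<open>additional hypotheses of the theorem\<close>
    and x0_feas: "x0 \<in> feasible_set f X U X0 N"
    and gamma_K: "Kinf gamma"
    and lam_cont: "\<forall>x\<in>X. \<bar>lam1 x - lam1 xe\<bar> \<le> gamma (norm (x - xe))"
    and ell_eq: "ell 1 xe ue = 0"
  shows
    \<comment> \<open>Algorithm 1 is well defined: step (0) and every subsequent step admit a choice\<close>
    "(\<exists>us. us \<in> eff_controls f X U X0 N s ell F1 x0)
     \<and> (\<forall>K xcl us. alg1_prefix f X U X0 N s ell F1 \<kappa> x0 K xcl us \<longrightarrow>
          (\<exists>v. v \<in> eff_controls f X U X0 N s ell F1 (f (xcl K) (us K ! 0))
             \<and> Jcost f N ell F1 1 (f (xcl K) (us K ! 0)) v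
                 \<le> Jcost f N ell F1 1 (f (xcl K) (us K ! 0)) (shifted_seq f N \<kappa> (xcl K) (us K))))
     \<comment> \<open>for every run: forward invariance and closed-loop performance bound\<close>
     \<and> (\<forall>xcl us. (\<forall>K. alg1_prefix f X U X0 N s ell F1 \<kappa> x0 K xcl us) \<longrightarrow>
          (\<forall>k. xcl k \<in> X)
          \<and> summable (\<lambda>k. ell 1 (xcl k) (us k ! 0))
          \<and> (\<Sum>k. ell 1 (xcl k) (us k ! 0)) \<le> Jcost f N ell F1 1 x0 (us 0))"
proof -
  let ?eff = "eff_controls f X U X0 N s ell F1"
  let ?adm = "adm_controls f X U X0 N"
  let ?J = "Jcost f N ell F1 1"
  have x0X: "x0 \<in> X" using x0_feas unfolding feasible_set_def by blast
  have N1: "1 \<in> {1..N-1}" using N_ge by simp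
  have ellge: "\<forall>x\<in>X. \<forall>u\<in>U. ell 1 x u \<ge> lam1 (f x u) - lam1 x"
  proof (intro ballI)
    fix x u assume xu: "x \<in> X" "u \<in> U"
    have "alpha1 (norm (x - xe) + norm (u - ue)) \<ge> 0" by (intro Kinf_nonneg[OF alpha_K]) simp
    moreover have "ell 1 x u - ell 1 xe ue + lam1 x - lam1 (f x u) \<ge> alpha1 (norm (x - xe) + norm (u - ue))"
      using dissip xu by blast
    ultimately show "ell 1 x u \<ge> lam1 (f x u) - lam1 x" using ell_eq by linarith
  qed
  have rot: "ell 1 x u + lam1 x - lam1 (f x u) \<ge> alpha1 (norm (x - xe))" if "x \<in> X" "u \<in> U" for x u
  proof -
    have "alpha1 (norm (x - xe)) \<le> alpha1 (norm (x - xe) + norm (u - ue))"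
      by (intro Kinf_mono[OF alpha_K]) auto
    moreover have "ell 1 x u - ell 1 xe ue + lam1 x - lam1 (f x u) \<ge> alpha1 (norm (x - xe) + norm (u - ue))"
      using dissip that by blast
    ultimately show ?thesis using ell_eq by linarith
  qed
  have dec: "\<forall>x\<in>X0. F1 (f x (\<kappa> x)) + lam1 (f x (\<kappa> x)) + alpha1 (norm (x - xe)) \<le> F1 x + lam1 x"
  proof
    fix x assume x: "x \<in> X0"
    have "x \<in> X" "\<kappa> x \<in> U" using x X0_sub kappa_U by auto
    from rot[OF this] have "ell 1 x (\<kappa> x) + lam1 x - lam1 (f x (\<kappa> x)) \<ge> alpha1 (norm (x - xe))" .
    moreover have "F1 (f x (\<kappa> x)) + ell 1 x (\<kappa> x) \<le> F1 x + ell 1 xe ue" using kappa_dec x by blast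
    ultimately show "F1 (f x (\<kappa> x)) + lam1 (f x (\<kappa> x)) + alpha1 (norm (x - xe)) \<le> F1 x + lam1 x"
      using ell_eq by linarith
  qed
  have Wnn: "F1 x + lam1 x \<ge> 0" if "x \<in> X0" for x
    by (rule W_nonneg[where f=f and \<kappa>=\<kappa> and FF=F1 and lam=lam1 and X=X and XZ=X0 and xe=xe, OF alpha_K gamma_K lam_bdd X0_sub xe_X0 F1_cont F1_nonneg kappa_inv dec lam_cont lam_xe that])
  have eff_ne: "\<exists>v\<in>?eff x. ?J x v \<le> ?J x us" if "x \<in> feasible_set f X U X0 N" "us \<in> ?adm x" for x us
  proof -
    have "restrict (\<lambda>i. Jcost f N ell F1 i x us) {1..s} \<in> cost_vectors f N s ell F1 x (?adm x)"
      unfolding cost_vectors_def by (rule imageI[OF that(2)])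
    moreover have ES: "externally_stable s
          (cost_vectors f N s ell F1 x (?eff x)) (cost_vectors f N s ell F1 x (?adm x))"
      using ext_stab that(1) by blast
    ultimately obtain yP where yP: "yP \<in> cost_vectors f N s ell F1 x (?eff x)"
      "\<forall>i\<in>{1..s}. yP i \<le> restrict (\<lambda>i. Jcost f N ell F1 i x us) {1..s} i"
      unfolding externally_stable_def by blast
    then obtain v where v: "v \<in> ?eff x" "yP = restrict (\<lambda>i. Jcost f N ell F1 i x v) {1..s}"
      unfolding cost_vectors_def by blast
    have "1 \<in> {1..s}" using s_ge by simp
    with yP(2) v(2) have "?J x v \<le> ?J x us" by simp
    with v(1) show ?thesis by blast
  qed
  have eff_adm: "?eff x \<subseteq> ?adm x" for x unfolding eff_controls_def by auto
  have step: "f x (u!0) \<in> feasible_set f X U X0 N \<and> shifted_seq f N \<kappa> x u \<in> ?adm (f x (u!0))"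
    if "u \<in> ?adm x" for x u
  proof -
    have sh: "shifted_seq f N \<kappa> x u \<in> ?adm (f x (u!0))"
      by (rule shifted_adm[OF that N_ge kappa_U kappa_inv X0_sub])
    have "traj f x u 1 \<in> X" using that N1 unfolding adm_controls_def by blast
    hence "f x (u!0) \<in> X" by simp
    with sh show ?thesis unfolding feasible_set_def by blast
  qed
  have pre: "us k \<in> ?eff (xcl k) \<and> xcl k \<in> X"
    if P: "alg1_prefix f X U X0 N s ell F1 \<kappa> x0 K xcl us" and k: "k \<le> K" for K xcl us k
  proof (cases k)
    case 0 thus ?thesis using P x0X unfolding alg1_prefix_def by auto
  next
    case (Suc j)
    hence j: "j < K" "j \<le> K" using k by auto
    have A: "xcl (Suc j) = f (xcl j) (us j ! 0)" "us (Suc j) \<in> ?eff (xcl (Suc j))"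
      using P j(1) unfolding alg1_prefix_def by blast+
    have "us j \<in> ?eff (xcl j)"
    proof (cases j)
      case 0 thus ?thesis using P unfolding alg1_prefix_def by auto
    next
      case (Suc i)
      hence "i < K" using j(1) by simp
      hence "us (Suc i) \<in> ?eff (xcl (Suc i))" using P unfolding alg1_prefix_def by blast
      thus ?thesis using Suc by simp
    qed
    hence "us j \<in> ?adm (xcl j)" using eff_adm by blast
    hence "f (xcl j) (us j ! 0) \<in> feasible_set f X U X0 N" using step by blast
    hence "f (xcl j) (us j ! 0) \<in> X" unfolding feasible_set_def by blast
    hence "xcl (Suc j) \<in> X" using A(1) by simp
    thus ?thesis using A Suc by simp
  qed
  have part1: "\<exists>us. us \<in> ?eff x0"
  proof -
    obtain u where "u \<in> ?adm x0" using x0_feas unfolding feasible_set_def by blast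
    thus ?thesis using eff_ne[OF x0_feas] by blast
  qed
  have part2: "\<forall>K xcl us. alg1_prefix f X U X0 N s ell F1 \<kappa> x0 K xcl us \<longrightarrow>
          (\<exists>v. v \<in> ?eff (f (xcl K) (us K ! 0))
             \<and> ?J (f (xcl K) (us K ! 0)) v
                 \<le> ?J (f (xcl K) (us K ! 0)) (shifted_seq f N \<kappa> (xcl K) (us K)))"
  proof (intro allI impI)
    fix K xcl us assume P: "alg1_prefix f X U X0 N s ell F1 \<kappa> x0 K xcl us"
    have "us K \<in> ?adm (xcl K)" using pre[OF P order_refl] eff_adm by blast
    from step[OF this] eff_ne show "\<exists>v. v \<in> ?eff (f (xcl K) (us K ! 0))
             \<and> ?J (f (xcl K) (us K ! 0)) v
                 \<le> ?J (f (xcl K) (us K ! 0)) (shifted_seq f N \<kappa> (xcl K) (us K))" by blast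
  qed
  have part3: "(\<forall>k. xcl k \<in> X)
          \<and> summable (\<lambda>k. ell 1 (xcl k) (us k ! 0))
          \<and> (\<Sum>k. ell 1 (xcl k) (us k ! 0)) \<le> ?J x0 (us 0)"
    if all: "\<forall>K. alg1_prefix f X U X0 N s ell F1 \<kappa> x0 K xcl us" for xcl us
  proof -
    have effk: "us k \<in> ?eff (xcl k)" and xX: "xcl k \<in> X" for k using pre[OF all[rule_format, of k]] by auto
    have admk: "us k \<in> ?adm (xcl k)" for k using effk eff_adm by blast
    have lenk: "length (us k) = N" for k using admk[of k] unfolding adm_controls_def by blast
    have uU: "us k ! 0 \<in> U" for k
    proof -
      have "us k ! 0 \<in> set (us k)" using N_ge lenk[of k] by simp
      thus ?thesis using admk[of k] unfolding adm_controls_def by blast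
    qed
    have zX0: "traj f (xcl k) (us k) N \<in> X0" for k using admk[of k] unfolding adm_controls_def by blast
    have xSuc: "xcl (Suc k) = f (xcl k) (us k ! 0)"
      and Jb: "?J (xcl (Suc k)) (us (Suc k)) \<le> ?J (xcl (Suc k)) (shifted_seq f N \<kappa> (xcl k) (us k))" for k
      using all[rule_format, of "Suc k"] unfolding alg1_prefix_def by auto
    have x00: "xcl 0 = x0" using all[rule_format, of 0] unfolding alg1_prefix_def by auto
    define V where "V k = ?J (xcl k) (us k)" for k
    define e where "e k = ell 1 (xcl k) (us k ! 0)" for k
    define L where "L k = e k + lam1 (xcl k) - lam1 (xcl (Suc k))" for k
    have Vdec: "V (Suc k) \<le> V k - e k" for k
    proof -
      let ?z = "traj f (xcl k) (us k) N"
      have "?J (xcl (Suc k)) (shifted_seq f N \<kappa> (xcl k) (us k)) = V k - e k + ell 1 ?z (\<kappa> ?z)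
        + F1 (f ?z (\<kappa> ?z)) - F1 ?z"
        unfolding xSuc V_def e_def by (rule shifted_cost[OF lenk]) (use N_ge in simp)
      moreover have "F1 (f ?z (\<kappa> ?z)) + ell 1 ?z (\<kappa> ?z) \<le> F1 ?z + ell 1 xe ue"
        using kappa_dec zX0[of k] by blast
      ultimately show ?thesis using Jb[of k] ell_eq unfolding V_def by linarith
    qed
    have Vlb: "V k \<ge> - lam1 (xcl k)" for k
    proof -
      let ?z = "traj f (xcl k) (us k) N"
      have "V k \<ge> lam1 ?z - lam1 (xcl k) + F1 ?z" unfolding V_def
        by (rule cost_lower[where ell=ell and lam=lam1, OF admk[of k] xX[of k] ellge])
      thus ?thesis using Wnn[OF zX0[of k]] by linarith
    qed
    have Lge: "L k \<ge> alpha1 (norm (xcl k - xe))" for k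
      using rot[OF xX uU] xSuc[of k] unfolding L_def e_def by simp
    have Lnn: "L k \<ge> 0" for k using Lge[of k] Kinf_nonneg[OF alpha_K, of "norm (xcl k - xe)"] by simp
    have Spart: "(\<Sum>k<K. e k) \<le> V 0 - V K" for K
    proof (induction K)
      case 0 show ?case by simp
    next
      case (Suc K) thus ?case using Vdec[of K] by simp
    qed
    have Lpart: "(\<Sum>k<K. L k) = (\<Sum>k<K. e k) + lam1 (xcl 0) - lam1 (xcl K)" for K
    proof (induction K)
      case 0 show ?case by simp
    next
      case (Suc K) thus ?case unfolding L_def by simp
    qed
    have "summable L"
    proof (rule summableI_nonneg_bounded[where x="V 0 + lam1 (xcl 0)"])
      fix n show "0 \<le> L n" by (rule Lnn)
      show "(\<Sum>i<n. L i) \<le> V 0 + lam1 (xcl 0)" using Lpart[of n] Spart[of n] Vlb[of n] by linarith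
    qed
    hence L0: "L \<longlonglongrightarrow> 0" by (rule summable_LIMSEQ_zero)
    have "\<forall>k. norm (alpha1 (norm (xcl k - xe))) \<le> L k"
      using Lge Kinf_nonneg[OF alpha_K] by simp
    hence "(\<lambda>k. alpha1 (norm (xcl k - xe))) \<longlonglongrightarrow> 0"
      by (intro Lim_null_comparison[OF always_eventually L0]) blast
    hence r0: "(\<lambda>k. norm (xcl k - xe)) \<longlonglongrightarrow> 0" using Kinf_to_zero[OF alpha_K] by simp
    have gl: "(\<lambda>k. gamma (norm (xcl k - xe))) \<longlonglongrightarrow> 0" using Kinf_tendsto_zero[OF gamma_K _ r0] by simp
    have "\<forall>k. norm (lam1 (xcl k)) \<le> gamma (norm (xcl k - xe))" using lam_cont xX lam_xe by auto
    hence laml: "(\<lambda>k. lam1 (xcl k)) \<longlonglongrightarrow> 0"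
      by (intro Lim_null_comparison[OF always_eventually gl]) blast
    have tel: "(\<lambda>k. lam1 (xcl k) - lam1 (xcl (Suc k))) sums (lam1 (xcl 0) - 0)"
      by (rule telescope_sums'[OF laml])
    have eeq: "e = (\<lambda>k. L k - (lam1 (xcl k) - lam1 (xcl (Suc k))))" unfolding L_def by auto
    have se: "summable e" unfolding eeq
      by (intro summable_diff \<open>summable L\<close> sums_summable[OF tel])
    have "(\<lambda>K. \<Sum>k<K. e k) \<longlonglongrightarrow> suminf e" using se by (rule summable_LIMSEQ)
    moreover have "(\<lambda>K. V 0 + lam1 (xcl K)) \<longlonglongrightarrow> V 0 + 0" by (intro tendsto_add tendsto_const laml)
    moreover have "\<forall>K. (\<Sum>k<K. e k) \<le> V 0 + lam1 (xcl K)" using Spart Vlb by (smt (verit))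
    ultimately have "suminf e \<le> V 0 + 0" by (intro LIMSEQ_le) auto
    hence "suminf e \<le> ?J x0 (us 0)" using x00 unfolding V_def by simp
    moreover have "summable (\<lambda>k. ell 1 (xcl k) (us k ! 0))" using se unfolding e_def .
    ultimately show ?thesis using xX unfolding e_def by blast
  qed
  show ?thesis using part1 part2 part3 by blast
qed

end
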